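(* Let $G=\langle s_1,s_2\mid s_2s_2=s_2\rangle$ and $\mathcal{A}=\{1,2\}$. Let $X\subseteq\mathcal{A}^G$ be a nonempty $G$-shift space, and for $n\ge 0$ let $\gamma_n$ be the number of distinct restrictions $t|_{E_n}$ with $t\in X$. Then the limit $$h(X)=\lim_{n\to\infty}\frac{\ln\gamma_n}{|E_n|}$$ exists (equivalently, the $\limsup$ defining the topological entropy is a limit).
   Context: $G$ is the monoid (identity $e$) generated by $s_1,s_2$ subject only to the relation $s_2s_2=s_2$; each element is represented uniquely by a finite word over $\{s_1,s_2\}$ containing no factor $s_2s_2$, and $|g|$ denotes the length of this word. $E_n=\{g\in G:|g|\le n\}$. For $t\in\mathcal{A}^G$ write $t_g=t(g)$. An $n$-block is a map $\tau:E_n\to\mathcal{A}$; a configuration $t$ accepts $\tau$ if there is $g\in G$ with $t_{gg'}=\tau_{g'}$ for all $g'\in E_n$, and avoids it otherwise. A $G$-shift space is a set $X\subseteq\mathcal{A}^G$ consisting of all configurations that avoid every block in some given set of forbidden blocks. The topological entropy is defined as $h(X)=\limsup_{n\to\infty}\ln\gamma_n/|E_n|$. *)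

theory Defs
  imports "HOL-Analysis.Analysis" "HOL-Library.FuncSet"
begin

text \<open>The monoid G = < s1, s2 | s2 s2 = s2 >, elements represented by their
unique reduced words (no factor s2 s2).\<close>

datatype gen = S1 | S2

fun reduced :: "gen list \<Rightarrow> bool" where
  "reduced [] = True"
| "reduced [x] = True"
| "reduced (x # y # w) = (\<not> (x = S2 \<and> y = S2) \<and> reduced (y # w))"

definition Gset :: "gen list set" where
  "Gset = {w. reduced w}"

definition gmul :: "gen list \<Rightarrow> gen list \<Rightarrow> gen list" where
  "gmul u v = (if u \<noteq> [] \<and> v \<noteq> [] \<and> last u = S2 \<and> hd v = S2 then u @ tl v else u @ v)"

definition E :: "nat \<Rightarrow> gen list set" where
  "E n = {g \<in> Gset. length g \<le> n}"

definition Alph :: "nat set" where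
  "Alph = {1, 2}"

definition Conf :: "(gen list \<Rightarrow> nat) set" where
  "Conf = Gset \<rightarrow>\<^sub>E Alph"

definition blocks :: "nat \<Rightarrow> (gen list \<Rightarrow> nat) set" where
  "blocks n = E n \<rightarrow>\<^sub>E Alph"

definition accepts :: "(gen list \<Rightarrow> nat) \<Rightarrow> nat \<Rightarrow> (gen list \<Rightarrow> nat) \<Rightarrow> bool" where
  "accepts t n \<tau> = (\<exists>g\<in>Gset. \<forall>g'\<in>E n. t (gmul g g') = \<tau> g')"

definition shift_of :: "(nat \<times> (gen list \<Rightarrow> nat)) set \<Rightarrow> (gen list \<Rightarrow> nat) set" where
  "shift_of F = {t \<in> Conf. \<forall>(n, \<tau>) \<in> F. \<not> accepts t n \<tau>}"

definition is_shift_space :: "(gen list \<Rightarrow> nat) set \<Rightarrow> bool" where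
  "is_shift_space X = (\<exists>F. F \<subseteq> {(n, \<tau>). \<tau> \<in> blocks n} \<and> X = shift_of F)"

definition gamma :: "(gen list \<Rightarrow> nat) set \<Rightarrow> nat \<Rightarrow> nat" where
  "gamma X n = card ((\<lambda>t. restrict t (E n)) ` X)"

end

theory Submission
  imports Defs
begin

lemma reduced_S1[simp]: "reduced (S1 # w) = reduced w"
  by (cases w) auto

lemma reduced_S2: "reduced (S2 # w) = (reduced w \<and> (w \<noteq> [] \<longrightarrow> hd w \<noteq> S2))"
  by (cases w) auto

lemma reduced_append:
  "reduced (u @ v) = (reduced u \<and> reduced v \<and> \<not>(u \<noteq> [] \<and> v \<noteq> [] \<and> last u = S2 \<and> hd v = S2))"
proof (induction u)
  case Nil then show ?case by simp
next
  case (Cons a u)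
  show ?case
  proof (cases a)
    case S1 then show ?thesis using Cons by auto
  next
    case S2 then show ?thesis using Cons
      by (cases u; cases v) (auto simp: reduced_S2)
  qed
qed

lemma gmul_closed: "reduced u \<Longrightarrow> reduced v \<Longrightarrow> reduced (gmul u v)"
  unfolding gmul_def
  apply (cases v)
   apply (auto simp: reduced_append reduced_S2)
  done

lemma gmul_prefix1: "p \<noteq> [] \<Longrightarrow> last p = S1 \<Longrightarrow> gmul p g = p @ g"
  by (simp add: gmul_def)

lemma gmul_prefix2: "p \<noteq> [] \<Longrightarrow> last p = S1 \<Longrightarrow> gmul (p @ g0) g' = p @ gmul g0 g'"
  by (cases "g0 = []") (auto simp: gmul_def)

definition shiftc :: "gen list \<Rightarrow> (gen list \<Rightarrow> nat) \<Rightarrow> (gen list \<Rightarrow> nat)" where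
  "shiftc g t = restrict (\<lambda>h. t (gmul g h)) Gset"

lemma shift_in_X:
  assumes X: "is_shift_space X" and t: "t \<in> X" and p: "reduced p" "p \<noteq> []" "last p = S1"
  shows "shiftc p t \<in> X"
proof -
  obtain F where F: "X = shift_of F" using X unfolding is_shift_space_def by blast
  have tC: "t \<in> Conf" and tF: "\<forall>(n, \<tau>) \<in> F. \<not> accepts t n \<tau>" using t F unfolding shift_of_def by auto
  have C: "shiftc p t \<in> Conf"
    using tC p gmul_closed unfolding Conf_def shiftc_def Gset_def by (auto simp: PiE_def Pi_def)
  have "\<not> accepts (shiftc p t) n \<tau>" if "(n, \<tau>) \<in> F" for n \<tau>
  proof
    assume "accepts (shiftc p t) n \<tau>"
    then obtain g0 where g0: "g0 \<in> Gset" and h: "\<forall>g'\<in>E n. shiftc p t (gmul g0 g') = \<tau> g'"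
      unfolding accepts_def by blast
    have "\<forall>g'\<in>E n. t (gmul (gmul p g0) g') = \<tau> g'"
    proof
      fix g' assume g': "g' \<in> E n"
      then have "gmul g0 g' \<in> Gset" using g0 gmul_closed unfolding E_def Gset_def by auto
      moreover have "shiftc p t (gmul g0 g') = \<tau> g'" using h g' by blast
      ultimately show "t (gmul (gmul p g0) g') = \<tau> g'"
        using p by (simp add: shiftc_def gmul_prefix1 gmul_prefix2)
    qed
    moreover have "gmul p g0 \<in> Gset" using g0 p gmul_closed unfolding Gset_def by auto
    ultimately have "accepts t n \<tau>" unfolding accepts_def by blast
    then show False using tF that by auto
  qed
  then show ?thesis using C F unfolding shift_of_def by auto
qed

lemma E_decomp: "E (Suc (Suc n)) = insert [] (insert [S2] ((Cons S1) ` E (Suc n) \<union> (\<lambda>w. S2 # S1 # w) ` E n))"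
proof (rule set_eqI)
  fix w
  show "w \<in> E (Suc (Suc n)) \<longleftrightarrow> w \<in> insert [] (insert [S2] ((Cons S1) ` E (Suc n) \<union> (\<lambda>w. S2 # S1 # w) ` E n))"
  proof (cases w)
    case Nil then show ?thesis by (simp add: E_def Gset_def)
  next
    case (Cons a w')
    show ?thesis
    proof (cases a)
      case S1 then show ?thesis using Cons by (auto simp: E_def Gset_def)
    next
      case S2
      show ?thesis
      proof (cases w')
        case Nil then show ?thesis using Cons S2 by (auto simp: E_def Gset_def)
      next
        case (Cons b w'')
        then show ?thesis using \<open>w = a # w'\<close> S2 by (cases b) (auto simp: E_def Gset_def)
      qed
    qed
  qed
qed

lemma UNIV_gen: "(UNIV :: gen set) = {S1, S2}"
  using gen.exhaust by auto

lemma finite_E: "finite (E n)"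
proof -
  have "E n \<subseteq> {xs. set xs \<subseteq> UNIV \<and> length xs \<le> n}" unfolding E_def by auto
  moreover have "finite {xs. set xs \<subseteq> (UNIV :: gen set) \<and> length xs \<le> n}"
    by (rule finite_lists_length_le) (simp add: UNIV_gen)
  ultimately show ?thesis by (rule finite_subset)
qed

lemma card_E_rec: "card (E (Suc (Suc n))) = card (E (Suc n)) + card (E n) + 2"
proof -
  let ?A = "(Cons S1) ` E (Suc n)" and ?B = "(\<lambda>w. S2 # S1 # w) ` E n"
  have cA: "card ?A = card (E (Suc n))" by (rule card_image) (auto simp: inj_on_def)
  have cB: "card ?B = card (E n)" by (rule card_image) (auto simp: inj_on_def)
  have fA: "finite ?A" "finite ?B" using finite_E by auto
  have "card (?A \<union> ?B) = card ?A + card ?B" by (rule card_Un_disjoint) (use fA in auto)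
  moreover have "[] \<notin> ?A \<union> ?B" "[S2] \<notin> ?A \<union> ?B" by auto
  ultimately show ?thesis unfolding E_decomp using fA cA cB by simp
qed

lemma card_E0: "card (E 0) = 1"
proof -
  have "E 0 = {[]}" by (auto simp: E_def Gset_def)
  then show ?thesis by simp
qed

lemma card_E1: "card (E 1) = 3"
proof -
  have "E 1 = {[], [S1], [S2]}"
  proof (rule set_eqI)
    fix x :: "gen list"
    show "x \<in> E 1 \<longleftrightarrow> x \<in> {[], [S1], [S2]}"
      by (cases x rule: remdups_adj.cases) (auto simp: E_def Gset_def intro: gen.exhaust)
  qed
  then show ?thesis by simp
qed

definition R :: "(gen list \<Rightarrow> nat) set \<Rightarrow> nat \<Rightarrow> (gen list \<Rightarrow> nat) set" where
  "R X n = (\<lambda>t. restrict t (E n)) ` X"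

lemma finite_R: "X \<subseteq> Conf \<Longrightarrow> finite (R X n)"
proof -
  assume X: "X \<subseteq> Conf"
  have "R X n \<subseteq> E n \<rightarrow>\<^sub>E Alph"
    using X unfolding R_def Conf_def E_def by (auto simp: PiE_def Pi_def)
  moreover have "finite (E n \<rightarrow>\<^sub>E Alph)" using finite_E by (intro finite_PiE) (auto simp: Alph_def)
  ultimately show ?thesis by (rule finite_subset)
qed

definition recon :: "nat \<Rightarrow> nat \<times> nat \<times> (gen list \<Rightarrow> nat) \<times> (gen list \<Rightarrow> nat) \<Rightarrow> (gen list \<Rightarrow> nat)" where
  "recon n x = (case x of (a, b, P, Q) \<Rightarrow> (\<lambda>w. if w \<in> E (Suc (Suc n)) then
     (if w = [] then a else if w = [S2] then b else if hd w = S1 then P (tl w) else Q (tl (tl w))) else undefined))"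

lemma gamma_rec:
  assumes X: "is_shift_space X"
  shows "card (R X (Suc (Suc n))) \<le> 4 * card (R X (Suc n)) * card (R X n)"
proof -
  have XC: "X \<subseteq> Conf" using X unfolding is_shift_space_def shift_of_def by auto
  let ?S = "Alph \<times> Alph \<times> R X (Suc n) \<times> R X n"
  let ?tup = "\<lambda>t. (t [], t [S2], restrict (shiftc [S1] t) (E (Suc n)), restrict (shiftc [S2, S1] t) (E n))"
  have sub: "R X (Suc (Suc n)) \<subseteq> recon n ` ?S"
  proof
    fix r assume "r \<in> R X (Suc (Suc n))"
    then obtain t where t: "t \<in> X" and r: "r = restrict t (E (Suc (Suc n)))" unfolding R_def by auto
    have tC: "t \<in> Conf" using t XC by auto
    have e: "[] \<in> Gset" "[S2] \<in> Gset" by (auto simp: Gset_def)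
    have in1: "t [] \<in> Alph" "t [S2] \<in> Alph" using tC e unfolding Conf_def by auto
    have "shiftc [S1] t \<in> X" by (rule shift_in_X[OF X t]) auto
    then have in2: "restrict (shiftc [S1] t) (E (Suc n)) \<in> R X (Suc n)" unfolding R_def by auto
    have "shiftc [S2, S1] t \<in> X" by (rule shift_in_X[OF X t]) auto
    then have in3: "restrict (shiftc [S2, S1] t) (E n) \<in> R X n" unfolding R_def by auto
    have eq: "r = recon n (?tup t)"
    proof
      fix w
      show "r w = recon n (?tup t) w"
      proof (cases "w \<in> E (Suc (Suc n))")
        case False then show ?thesis by (simp add: r recon_def)
      next
        case True
        then consider "w = []" | "w = [S2]" | w' where "w = S1 # w'" "w' \<in> E (Suc n)"
          | w' where "w = S2 # S1 # w'" "w' \<in> E n"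
          unfolding E_decomp by blast
        then show ?thesis
        proof cases
          case 3 then show ?thesis using True
            by (auto simp: r recon_def shiftc_def gmul_def E_def)
        next
          case 4 then show ?thesis using True
            by (auto simp: r recon_def shiftc_def gmul_def E_def)
        qed (use True in \<open>auto simp: r recon_def\<close>)
      qed
    qed
    show "r \<in> recon n ` ?S" using eq in1 in2 in3 by blast
  qed
  have fS: "finite ?S" using finite_R[OF XC] by (auto simp: Alph_def)
  have "card (R X (Suc (Suc n))) \<le> card (recon n ` ?S)"
    by (rule card_mono) (use fS sub in auto)
  also have "\<dots> \<le> card ?S" by (rule card_image_le[OF fS])
  also have "\<dots> = 4 * card (R X (Suc n)) * card (R X n)"
    by (simp add: card_cartesian_product Alph_def)
  finally show ?thesis .
qed



lemma contr_lim:
  fixes e d :: "nat \<Rightarrow> real"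
  assumes q: "0 \<le> q" "q < 1" and rec: "\<And>n. \<bar>e (Suc n)\<bar> \<le> q * \<bar>e n\<bar> + d n"
    and d: "d \<longlonglongrightarrow> 0"
  shows "e \<longlonglongrightarrow> 0"
proof (rule metric_LIMSEQ_I)
  fix r :: real assume r: "r > 0"
  have "r * (1 - q) / 2 > 0" using r q by simp
  then obtain N where N: "\<And>n. n \<ge> N \<Longrightarrow> \<bar>d n\<bar> < r * (1 - q) / 2"
    using d unfolding lim_sequentially dist_real_def by (metis diff_zero)
  have ind: "\<bar>e (N + k)\<bar> \<le> q ^ k * \<bar>e N\<bar> + r / 2" for k
  proof (induction k)
    case 0 then show ?case using r by simp
  next
    case (Suc k)
    have "\<bar>e (N + Suc k)\<bar> \<le> q * \<bar>e (N + k)\<bar> + d (N + k)" using rec[of "N + k"] by simp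
    also have "\<dots> \<le> q * (q ^ k * \<bar>e N\<bar> + r / 2) + r * (1 - q) / 2"
      using N[of "N + k"] Suc q by (intro add_mono mult_left_mono) auto
    also have "\<dots> = q ^ Suc k * \<bar>e N\<bar> + r / 2" by (simp add: field_simps)
    finally show ?case .
  qed
  have "(\<lambda>k. q ^ k * \<bar>e N\<bar>) \<longlonglongrightarrow> 0 * \<bar>e N\<bar>"
    by (intro tendsto_mult tendsto_const LIMSEQ_power_zero) (use q in auto)
  then have "\<forall>r>0. \<exists>no. \<forall>k\<ge>no. \<bar>q ^ k * \<bar>e N\<bar>\<bar> < r"
    unfolding lim_sequentially dist_real_def by simp
  moreover have "r / 2 > 0" using r by simp
  ultimately obtain K where K: "\<And>k. k \<ge> K \<Longrightarrow> \<bar>q ^ k * \<bar>e N\<bar>\<bar> < r / 2"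
    by blast
  show "\<exists>no. \<forall>n\<ge>no. dist (e n) 0 < r"
  proof (intro exI allI impI)
    fix n assume n: "n \<ge> N + K"
    define k where "k = n - N"
    have k: "n = N + k" "k \<ge> K" using n by (auto simp: k_def)
    have "\<bar>e n\<bar> \<le> q ^ k * \<bar>e N\<bar> + r / 2" using ind k by simp
    moreover have "q ^ k * \<bar>e N\<bar> < r / 2" using K[OF k(2)] by simp
    ultimately show "dist (e n) 0 < r" by (simp add: dist_real_def)
  qed
qed

definition phi :: real where "phi = (1 + sqrt 5) / 2"

lemma phi_sq: "phi ^ 2 = phi + 1"
  by (simp add: phi_def power2_eq_square algebra_simps)

lemma phi_gt1: "phi > 1"
proof -
  have "sqrt 5 > 1" by simp
  then show ?thesis by (simp add: phi_def)
qed

lemma phi_le2: "phi \<le> 2"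
proof -
  have "sqrt 5 \<le> 3" by (rule real_le_lsqrt) auto
  then show ?thesis by (simp add: phi_def)
qed

lemma aux_alg:
  fixes P A B K :: real
  assumes "P > 0"
  shows "(A - B) / P - K = 1 / P * (A - K * (P + 1)) - 1 / P * (B - K)"
  using assms by (simp add: field_simps)

lemma fib_conv:
  fixes x :: "nat \<Rightarrow> real"
  assumes pos: "\<And>n. x n \<ge> 0" and rec: "\<And>n. x (Suc (Suc n)) \<le> x (Suc n) + x n"
  shows "\<exists>K. (\<lambda>n. x n / phi ^ n) \<longlonglongrightarrow> K"
proof -
  have p1: "phi > 1" by (rule phi_gt1)
  have p0: "phi > 0" using p1 by simp
  define z where "z n = (phi * x (Suc n) + x n) / phi ^ n" for n
  define s where "s n = x n / phi ^ n" for n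
  have zdec: "z (Suc n) \<le> z n" for n
  proof -
    have "phi * x (Suc (Suc n)) + x (Suc n) \<le> phi * (x (Suc n) + x n) + x (Suc n)"
      using rec[of n] p0 by (intro add_mono mult_left_mono) auto
    also have "\<dots> = phi * (phi * x (Suc n) + x n)"
    proof -
      have "phi * phi = phi + 1" using phi_sq by (simp add: power2_eq_square)
      then have "phi * (phi * x (Suc n)) = (phi + 1) * x (Suc n)"
        by (simp only: mult.assoc[symmetric])
      then have "phi * (phi * x (Suc n)) = x (Suc n) + phi * x (Suc n)"
        by (simp add: algebra_simps)
      then show ?thesis by (simp add: algebra_simps)
    qed
    finally have "(phi * x (Suc (Suc n)) + x (Suc n)) / phi ^ Suc n \<le> phi * (phi * x (Suc n) + x n) / phi ^ Suc n"
      using p0 by (intro divide_right_mono) auto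
    then show ?thesis using p0 by (simp add: z_def)
  qed
  have z0: "z n \<ge> 0" for n using pos p0 by (simp add: z_def)
  have "decseq z" using zdec by (simp add: decseq_Suc_iff)
  then obtain M where M: "z \<longlonglongrightarrow> M" using decseq_convergent[of z 0] z0 by blast
  define q where "q = 1 / phi ^ 2"
  have q: "0 \<le> q" "q < 1" using p1 by (auto simp: q_def)
  define K where "K = M / (phi ^ 2 + 1)"
  have zs: "z n = phi ^ 2 * s (Suc n) + s n" for n
    using p0 by (simp add: z_def s_def field_simps power2_eq_square)
  have er: "\<bar>s (Suc n) - K\<bar> \<le> q * \<bar>s n - K\<bar> + q * \<bar>z n - M\<bar>" for n
  proof -
    have "s (Suc n) = (z n - s n) / phi ^ 2" using zs[of n] p0 by (simp add: field_simps)
    moreover have KM: "M = K * (phi ^ 2 + 1)"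
    proof -
      have "phi ^ 2 + 1 > 0" by (simp add: add_nonneg_pos)
      then show ?thesis by (simp add: K_def)
    qed
    ultimately have "s (Suc n) - K = q * (z n - M) - q * (s n - K)"
      unfolding q_def using aux_alg[of "phi ^ 2" "z n" "s n" K] p0 by simp
    then have "\<bar>s (Suc n) - K\<bar> \<le> \<bar>q * (z n - M)\<bar> + \<bar>q * (s n - K)\<bar>"
      by (metis abs_triangle_ineq4)
    then show ?thesis using q by (simp add: abs_mult)
  qed
  have d: "(\<lambda>n. q * \<bar>z n - M\<bar>) \<longlonglongrightarrow> 0"
  proof -
    have "(\<lambda>n. z n - M) \<longlonglongrightarrow> M - M" using M by (intro tendsto_diff tendsto_const)
    then have "(\<lambda>n. z n - M) \<longlonglongrightarrow> 0" by simp
    then have "(\<lambda>n. \<bar>z n - M\<bar>) \<longlonglongrightarrow> 0" by (simp add: tendsto_rabs_zero)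
    then show ?thesis by (simp add: tendsto_mult_right_zero)
  qed
  have "(\<lambda>n. s n - K) \<longlonglongrightarrow> 0" by (rule contr_lim[OF q er d])
  then have "(\<lambda>n. (s n - K) + K) \<longlonglongrightarrow> 0 + K" by (intro tendsto_add tendsto_const)
  then have "s \<longlonglongrightarrow> K" by simp
  moreover have "s = (\<lambda>n. x n / phi ^ n)" by (rule ext) (simp add: s_def)
  ultimately show ?thesis by blast
qed


lemma div_cancel_aux: fixes c :: real assumes "c \<noteq> 0" shows "(A / c - B / c) / (D / c - F / c) = (A - B) / (D - F)"
proof -
  have "A / c - B / c = (A - B) / c" "D / c - F / c = (D - F) / c" by (simp_all add: diff_divide_distrib)
  then show ?thesis using assms by simp
qed

lemma pow_div_zero: "(\<lambda>n. c / phi ^ n) \<longlonglongrightarrow> 0"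
proof -
  have "(\<lambda>n. (1 / phi) ^ n) \<longlonglongrightarrow> 0" using phi_gt1 by (intro LIMSEQ_power_zero) auto
  then have "(\<lambda>n. c * (1 / phi) ^ n) \<longlonglongrightarrow> 0" by (rule tendsto_mult_right_zero)
  then show ?thesis by (simp add: power_one_over)
qed

lemma E_lower: "real (card (E n)) + 2 \<ge> phi ^ n \<and> real (card (E (Suc n))) + 2 \<ge> phi ^ Suc n"
proof (induction n)
  case 0 then show ?case using card_E0 card_E1 phi_le2 by simp
next
  case (Suc n)
  have "phi ^ Suc (Suc n) = phi ^ n * phi ^ 2" by (simp add: power2_eq_square)
  also have "\<dots> = phi ^ n * (phi + 1)" by (simp only: phi_sq)
  also have "\<dots> = phi ^ Suc n + phi ^ n" by (simp add: algebra_simps)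
  finally have "phi ^ Suc (Suc n) = phi ^ Suc n + phi ^ n" .
  then show ?case using Suc card_E_rec[of n] by simp
qed

theorem theorem1:
  assumes "is_shift_space X" and "X \<noteq> {}"
  shows "convergent (\<lambda>n. ln (real (gamma X n)) / real (card (E n)))"
proof -
  have X: "is_shift_space X" by fact
  have XC: "X \<subseteq> Conf" using X unfolding is_shift_space_def shift_of_def by auto
  define p where "p n = real (card (R X n))" for n
  have p1: "p n \<ge> 1" for n
  proof -
    have "R X n \<noteq> {}" using assms(2) by (simp add: R_def)
    then have "card (R X n) > 0" using finite_R[OF XC] by (simp add: card_gt_0_iff)
    then show ?thesis by (simp add: p_def)
  qed
  define u where "u n = ln (p n) + ln 4" for n
  have u0: "u n \<ge> 0" for n using p1[of n] by (simp add: u_def)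
  have urec: "u (Suc (Suc n)) \<le> u (Suc n) + u n" for n
  proof -
    have "p (Suc (Suc n)) \<le> 4 * p (Suc n) * p n"
      using gamma_rec[OF X, of n] unfolding p_def by (metis of_nat_le_iff of_nat_mult of_nat_numeral)
    then have "ln (p (Suc (Suc n))) \<le> ln (4 * p (Suc n) * p n)"
    proof -
      have q1: "p (Suc (Suc n)) > 0" "p (Suc n) > 0" "p n > 0"
        using p1[of n] p1[of "Suc n"] p1[of "Suc (Suc n)"] by linarith+
      then have "4 * p (Suc n) * p n > 0" by simp
      then show ?thesis using q1 \<open>p (Suc (Suc n)) \<le> 4 * p (Suc n) * p n\<close> by simp
    qed
    also have "\<dots> = ln 4 + ln (p (Suc n)) + ln (p n)"
      using p1[of n] p1[of "Suc n"] by (simp add: ln_mult)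
    finally show ?thesis by (simp add: u_def)
  qed
  obtain K where K: "(\<lambda>n. u n / phi ^ n) \<longlonglongrightarrow> K" using fib_conv[of u] u0 urec by blast
  define a where "a n = real (card (E n)) + 2" for n
  obtain L where L: "(\<lambda>n. a n / phi ^ n) \<longlonglongrightarrow> L"
  proof -
    have "\<exists>L. (\<lambda>n. a n / phi ^ n) \<longlonglongrightarrow> L"
    proof (rule fib_conv)
      fix n show "a n \<ge> 0" by (simp add: a_def)
      show "a (Suc (Suc n)) \<le> a (Suc n) + a n" by (simp add: a_def card_E_rec)
    qed
    then show ?thesis using that by blast
  qed
  have "L \<ge> 1"
  proof (rule LIMSEQ_le_const[OF L], intro exI allI impI)
    fix n
    have "a n \<ge> phi ^ n" using E_lower[of n] by (simp add: a_def)
    moreover have "phi ^ n > 0" using phi_gt1 by simp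
    ultimately show "1 \<le> a n / phi ^ n" by (simp add: le_divide_eq_1_pos)
  qed
  have lim: "(\<lambda>n. (u n / phi ^ n - ln 4 / phi ^ n) / (a n / phi ^ n - 2 / phi ^ n)) \<longlonglongrightarrow> (K - 0) / (L - 0)"
  proof (rule tendsto_divide)
    show "(\<lambda>n. u n / phi ^ n - ln 4 / phi ^ n) \<longlonglongrightarrow> K - 0" by (rule tendsto_diff[OF K pow_div_zero])
    show "(\<lambda>n. a n / phi ^ n - 2 / phi ^ n) \<longlonglongrightarrow> L - 0" by (rule tendsto_diff[OF L pow_div_zero])
    show "L - 0 \<noteq> 0" using \<open>L \<ge> 1\<close> by simp
  qed
  have eq: "(u n / phi ^ n - ln 4 / phi ^ n) / (a n / phi ^ n - 2 / phi ^ n) = ln (real (gamma X n)) / real (card (E n))" for n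
  proof -
    have "phi ^ n > 0" using phi_gt1 by simp
    then have "phi ^ n \<noteq> 0" by linarith
    then have "(u n / phi ^ n - ln 4 / phi ^ n) / (a n / phi ^ n - 2 / phi ^ n) = (u n - ln 4) / (a n - 2)"
      by (rule div_cancel_aux)
    moreover have "u n - ln 4 = ln (real (gamma X n))" by (simp add: u_def p_def R_def gamma_def)
    moreover have "a n - 2 = real (card (E n))" by (simp add: a_def)
    ultimately show ?thesis by simp
  qed
  have "(\<lambda>n. ln (real (gamma X n)) / real (card (E n))) \<longlonglongrightarrow> (K - 0) / (L - 0)"
    using lim by (simp only: eq)
  then show ?thesis by (rule convergentI)
qed

end
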